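(* Let $d\ge3$ and $p\colon S^{d-1}\to(0,\infty)$ Borel measurable with $\int_{S^{d-1}}p\,d\sigma_{d-1}\in(0,\infty)$. For $x\in S^{d-1}$ and $t\in(0,\|p\|_\infty)$ define $V(x,t):=\{v\in S^{d-2}_x:\lambda_1(L(x,v,t))>0\}$. Then for $\sigma_{d-1}$-almost every $x\in S^{d-1}$, $$\frac1{p(x)}\,\lambda_1\Big(\Big\{t\in(0,p(x)) : \tfrac{1}{\omega_{d-2}}\mu_x(V(x,t))=1\Big\}\Big)=1.$$
   Context: $S^{d-1}$ is the unit sphere in $\mathbb R^d$, $\sigma_{d-1}$ its volume measure, $\omega_{d-2}=\sigma_{d-2}(S^{d-2})$. $\|p\|_\infty$ is the $\sigma_{d-1}$-essential supremum of $p$ (possibly $+\infty$). For $x\in S^{d-1}$: $S^{d-2}_x:=\{v\in S^{d-1}:\langle v,x\rangle=0\}$ with natural volume measure $\mu_x$ (image of $\sigma_{d-2}$ under a linear isometry of $\mathbb R^{d-1}$ onto $x^\perp$; total mass $\omega_{d-2}$). $\gamma_{(x,v)}(\theta):=\cos(\theta)x+\sin(\theta)v$, $L(x,v,t):=\{\theta\in[0,2\pi):p(\gamma_{(x,v)}(\theta))>t\}$, and $\lambda_1$ is Lebesgue measure on $\mathbb R$. *)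

theory Defs
  imports "HOL-Probability.Probability"
begin

text \<open>Surface (volume) measure on the unit sphere of a Euclidean space, defined as the
  cone measure: sigma(A) = DIM * lambda_d({r y | 0 < r <= 1, y in A}).\<close>
definition sphere_measure :: "'a::euclidean_space measure" where
  "sphere_measure =
     scale_measure (of_nat DIM('a))
       (distr (restrict_space lborel (cball 0 1 - {0}))
              (restrict_space borel (sphere 0 1))
              (\<lambda>z. z /\<^sub>R norm z))"

definition sphere_volume :: "'a::euclidean_space itself \<Rightarrow> real" where
  "sphere_volume _ = measure (sphere_measure :: 'a measure) (sphere 0 1)"

definition perp_isometry :: "'n::euclidean_space \<Rightarrow> 'm::euclidean_space \<Rightarrow> 'n" where
  "perp_isometry x = (SOME f. linear f \<and> (\<forall>v. norm (f v) = norm v)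
                                \<and> range f = {v. x \<bullet> v = 0})"

definition perp_sphere_measure :: "'m::euclidean_space itself \<Rightarrow> 'n::euclidean_space \<Rightarrow> 'n measure" where
  "perp_sphere_measure _ x =
     distr (sphere_measure :: 'm measure) borel (perp_isometry x :: 'm \<Rightarrow> 'n)"

definition great_circle :: "'n::real_normed_vector \<Rightarrow> 'n \<Rightarrow> real \<Rightarrow> 'n" where
  "great_circle x v \<theta> = cos \<theta> *\<^sub>R x + sin \<theta> *\<^sub>R v"

definition Lset :: "('n::real_normed_vector \<Rightarrow> real) \<Rightarrow> 'n \<Rightarrow> 'n \<Rightarrow> real \<Rightarrow> real set" where
  "Lset p x v t = {\<theta> \<in> {0..<2*pi}. p (great_circle x v \<theta>) > t}"

definition Vset :: "('n::euclidean_space \<Rightarrow> real) \<Rightarrow> 'n \<Rightarrow> real \<Rightarrow> 'n set" where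
  "Vset p x t = {v \<in> sphere 0 1. x \<bullet> v = 0 \<and> emeasure lborel (Lset p x v t) > 0}"

end

theory Submission
  imports Defs
begin

lemma nullD: "S \<in> null_sets lborel \<Longrightarrow> negligible S"
  by (simp add: negligible_iff_null_sets null_sets_completionI)

lemma nullI: "negligible S \<Longrightarrow> S \<in> sets borel \<Longrightarrow> S \<in> null_sets lborel"
  by (metis negligible_iff_null_sets null_sets_completion_iff sets_lborel)

lemma diff_test: "(\<lambda>(c::real,d::real). ((c*a - d*b), (d*e - c*f))) differentiable_on S"
  apply (rule linear_imp_differentiable_on)
  apply (rule linearI) by (auto simp: algebra_simps)
definition NN :: "'n::euclidean_space set \<Rightarrow> 'n \<Rightarrow> 'n \<Rightarrow> bool" where
 "NN K y z \<longleftrightarrow> emeasure (lborel::(real\<times>real) measure) {ab. fst ab *\<^sub>R y + snd ab *\<^sub>R z \<in> K} = 0"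

lemma Qset_borel[measurable]: fixes y z :: "'n::euclidean_space" assumes "K \<in> sets borel" shows "{ab::real\<times>real. fst ab *\<^sub>R y + snd ab *\<^sub>R z \<in> K} \<in> sets borel"
proof -
  have "(\<lambda>ab::real\<times>real. fst ab *\<^sub>R y + snd ab *\<^sub>R z) -` K \<inter> space borel \<in> sets borel"
    by (rule measurable_sets[OF _ assms]) (intro borel_measurable_continuous_onI continuous_on_add continuous_on_scaleR continuous_on_fst continuous_on_snd continuous_on_id continuous_on_const)
  then show ?thesis by (simp add: vimage_def)
qed

lemma negligible_sub_null:
  assumes "negligible T" "S \<subseteq> T" "S \<in> sets borel" shows "emeasure lborel S = 0"
  using nullI[OF negligible_subset[OF assms(1,2)] assms(3)] by auto

lemma NN_lin:
  fixes y z :: "'n::euclidean_space"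
  assumes K[measurable]: "K \<in> sets borel" and N: "NN K y z" and D: "\<alpha>*\<delta> - \<beta>*\<gamma> \<noteq> 0"
  shows "NN K (\<alpha> *\<^sub>R y + \<beta> *\<^sub>R z) (\<gamma> *\<^sub>R y + \<delta> *\<^sub>R z)"
proof -
  let ?Q = "{ab::real\<times>real. fst ab *\<^sub>R y + snd ab *\<^sub>R z \<in> K}"
  let ?Q' = "{ab::real\<times>real. fst ab *\<^sub>R (\<alpha> *\<^sub>R y + \<beta> *\<^sub>R z) + snd ab *\<^sub>R (\<gamma> *\<^sub>R y + \<delta> *\<^sub>R z) \<in> K}"
  define Dt where "Dt = \<alpha>*\<delta> - \<beta>*\<gamma>"
  define Mi where "Mi = (\<lambda>(c::real,d::real). ((c*\<delta> - d*\<gamma>)/Dt, (d*\<alpha> - c*\<beta>)/Dt))"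
  have "?Q \<in> null_sets lborel" using N unfolding NN_def by auto
  then have negQ: "negligible ?Q" by (rule nullD)
  have "Mi differentiable_on ?Q" unfolding Mi_def
    apply (rule linear_imp_differentiable_on)
    apply (rule linearI) by (auto simp: algebra_simps add_divide_distrib diff_divide_distrib)
  from negligible_differentiable_image_negligible[OF order_refl negQ this]
  have neg: "negligible (Mi ` ?Q)" .
  have sub: "?Q' \<subseteq> Mi ` ?Q"
  proof
    fix ab assume ab: "ab \<in> ?Q'"
    obtain a b where [simp]: "ab = (a,b)" by (cases ab)
    let ?c = "a*\<alpha> + b*\<gamma>" and ?d = "a*\<beta> + b*\<delta>"
    have 1: "(?c, ?d) \<in> ?Q" using ab by (simp add: algebra_simps)
    have 2: "Mi (?c, ?d) = (a,b)" using D unfolding Mi_def Dt_def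
      by (auto simp: field_simps)
    show "ab \<in> Mi ` ?Q" by (rule image_eqI[of _ _ "(?c,?d)"]) (use 1 2 in auto)
  qed
  show ?thesis unfolding NN_def
    by (rule negligible_sub_null[OF neg sub]) measurable
qed

lemma null_linear_image:
  fixes f :: "'a::euclidean_space \<Rightarrow> 'b::euclidean_space"
  assumes "S \<in> null_sets lborel" "linear f" "T \<subseteq> f ` S" "T \<in> sets borel" "DIM('a) \<le> DIM('b)"
  shows "emeasure lborel T = 0"
proof -
  have "negligible (f ` S)"
    by (rule negligible_differentiable_image_negligible[OF assms(5) nullD[OF assms(1)]])
       (rule linear_imp_differentiable_on[OF assms(2)])
  then show ?thesis using negligible_sub_null assms by blast
qed

lemma NN_sym: "K \<in> sets borel \<Longrightarrow> NN K y z \<Longrightarrow> NN K z y"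
  using NN_lin[where \<alpha>=0 and \<beta>=1 and \<gamma>=1 and \<delta>=0] by simp

lemma NN_scale1: "K \<in> sets borel \<Longrightarrow> NN K y z \<Longrightarrow> c \<noteq> 0 \<Longrightarrow> NN K (c *\<^sub>R y) z"
  using NN_lin[where \<alpha>=c and \<beta>=0 and \<gamma>=0 and \<delta>=1] by simp

lemma NN_scale2: "K \<in> sets borel \<Longrightarrow> NN K y z \<Longrightarrow> c \<noteq> 0 \<Longrightarrow> NN K y (c *\<^sub>R z)"
  using NN_lin[where \<alpha>=1 and \<beta>=0 and \<gamma>=0 and \<delta>=c] by simp

lemma NN_scale1_iff: "K \<in> sets borel \<Longrightarrow> c \<noteq> 0 \<Longrightarrow> NN K (c *\<^sub>R y) z \<longleftrightarrow> NN K y z"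
  using NN_scale1[of K y z c] NN_scale1[of K "c *\<^sub>R y" z "inverse c"] by auto

lemma NN_scale2_iff: "K \<in> sets borel \<Longrightarrow> c \<noteq> 0 \<Longrightarrow> NN K y (c *\<^sub>R z) \<longleftrightarrow> NN K y z"
  using NN_scale2[of K y z c] NN_scale2[of K y "c *\<^sub>R z" "inverse c"] by auto

definition cone :: "'n::real_vector set \<Rightarrow> bool" where
  "cone K \<longleftrightarrow> (\<forall>c>0. \<forall>y. c *\<^sub>R y \<in> K \<longleftrightarrow> y \<in> K)"

lemma line_borel[measurable]:
  fixes u x :: "'n::euclidean_space"
  assumes "K \<in> sets borel" shows "{a::real. u + a *\<^sub>R x \<in> K} \<in> sets borel"
proof -
  have "(\<lambda>a::real. u + a *\<^sub>R x) -` K \<inter> space borel \<in> sets borel"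
    by (rule measurable_sets[OF _ assms]) (intro borel_measurable_continuous_onI continuous_intros)
  then show ?thesis by (simp add: vimage_def)
qed

lemma slice_null:
  fixes u x :: "'n::euclidean_space"
  assumes K[measurable]: "K \<in> sets borel" and C: "cone K" and N: "NN K u x"
  shows "emeasure lborel {a::real. u + a *\<^sub>R x \<in> K} = 0"
proof -
  let ?Q = "{ab::real\<times>real. fst ab *\<^sub>R u + snd ab *\<^sub>R x \<in> K}"
  have Qs: "?Q \<in> sets (lborel \<Otimes>\<^sub>M lborel)" unfolding lborel_prod by (simp add: Qset_borel)
  have "0 = emeasure (lborel \<Otimes>\<^sub>M lborel) ?Q" using N unfolding NN_def by (simp add: lborel_prod)
  also have "\<dots> = (\<integral>\<^sup>+b. emeasure lborel (Pair b -` ?Q) \<partial>lborel)"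
    by (rule lborel.emeasure_pair_measure_alt[OF Qs])
  finally have "(\<integral>\<^sup>+b. emeasure lborel (Pair b -` ?Q) \<partial>lborel) = 0" by simp
  then have "AE b in lborel. emeasure lborel (Pair b -` ?Q) = 0"
    by (subst (asm) nn_integral_0_iff_AE) (auto intro: lborel.measurable_emeasure_Pair[OF Qs])
  then obtain Nn where Nn: "Nn \<in> null_sets lborel" "{b \<in> space lborel. \<not> emeasure lborel (Pair b -` ?Q) = 0} \<subseteq> Nn"
    by (force elim!: AE_E simp: null_sets_def)
  show ?thesis
  proof (rule ccontr)
    assume ne: "emeasure lborel {a::real. u + a *\<^sub>R x \<in> K} \<noteq> 0"
    have "{0<..1::real} \<subseteq> Nn"
    proof
      fix b :: real assume b: "b \<in> {0<..1}"
      have "emeasure lborel (Pair b -` ?Q) \<noteq> 0"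
      proof
        assume z: "emeasure lborel (Pair b -` ?Q) = 0"
        have "emeasure lborel {a::real. u + a *\<^sub>R x \<in> K} = 0"
        proof (rule null_linear_image[where f="\<lambda>a. a / b"])
          show "Pair b -` ?Q \<in> null_sets lborel" using z by (simp add: null_sets_def) measurable
          show "linear (\<lambda>a::real. a / b)" by (rule linearI) (auto simp: add_divide_distrib)
          show "{a::real. u + a *\<^sub>R x \<in> K} \<subseteq> (\<lambda>a. a / b) ` (Pair b -` ?Q)"
          proof
            fix a assume a: "a \<in> {a::real. u + a *\<^sub>R x \<in> K}"
            have "b *\<^sub>R (u + a *\<^sub>R x) \<in> K" using C a b unfolding cone_def by auto
            then have "b * a \<in> Pair b -` ?Q" by (simp add: algebra_simps)
            moreover have "a = (b * a) / b" using b by auto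
            ultimately show "a \<in> (\<lambda>a. a / b) ` (Pair b -` ?Q)" by blast
          qed
        qed (auto)
        with ne show False by simp
      qed
      then show "b \<in> Nn" using Nn(2) by auto
    qed
    then have "emeasure lborel {0<..1::real} \<le> emeasure lborel Nn"
      using Nn(1) by (intro emeasure_mono) auto
    then show False using Nn(1) by (simp add: null_sets_def)
  qed
qed


lemma cont_pre:
  assumes "continuous_on UNIV g" "S \<in> sets borel" shows "{v. g v \<in> S} \<in> sets borel"
proof -
  have "g -` S \<inter> space borel \<in> sets borel"
    by (rule measurable_sets[OF _ assms(2)]) (rule borel_measurable_continuous_onI[OF assms(1)])
  then show ?thesis by (simp add: vimage_def)
qed

lemma sets_borel_lborel: "sets (borel \<Otimes>\<^sub>M lborel) = sets (borel :: ('a::euclidean_space \<times> 'b::euclidean_space) measure)"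
  by (metis borel_prod sets_lborel sets_pair_measure_cong)

lemma sets_lborel_lborel: "sets (lborel \<Otimes>\<^sub>M lborel) = sets (borel :: ('a::euclidean_space \<times> 'b::euclidean_space) measure)"
  by (metis lborel_prod sets_lborel)

lemma NN_meas:
  fixes K :: "'n::euclidean_space set"
  assumes K: "K \<in> sets borel"
  shows "{p::'n\<times>'n. NN K (fst p) (snd p)} \<in> sets borel"
proof -
  let ?Q = "{pq::('n\<times>'n)\<times>(real\<times>real). fst (snd pq) *\<^sub>R fst (fst pq) + snd (snd pq) *\<^sub>R snd (fst pq) \<in> K}"
  have "?Q \<in> sets borel"
    by (rule cont_pre[OF _ K]) (intro continuous_intros)
  then have Q: "?Q \<in> sets (borel \<Otimes>\<^sub>M lborel)" by (simp only: sets_borel_lborel)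
  have "(\<lambda>p. emeasure lborel (Pair p -` ?Q)) \<in> borel_measurable borel"
    by (rule lborel.measurable_emeasure_Pair[OF Q])
  moreover have "\<And>p. Pair p -` ?Q = {ab. fst ab *\<^sub>R fst p + snd ab *\<^sub>R snd p \<in> K}" by auto
  ultimately have m: "(\<lambda>p::'n\<times>'n. emeasure (lborel::(real\<times>real) measure) {ab. fst ab *\<^sub>R fst p + snd ab *\<^sub>R snd p \<in> K}) \<in> borel_measurable borel"
    by simp
  have "(\<lambda>p::'n\<times>'n. emeasure (lborel::(real\<times>real) measure) {ab. fst ab *\<^sub>R fst p + snd ab *\<^sub>R snd p \<in> K}) -` {0} \<inter> space borel \<in> sets borel"
    by (rule measurable_sets[OF m]) simp
  then show ?thesis by (simp add: NN_def vimage_def)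
qed


lemma perp_iso:
  fixes x :: "'n::euclidean_space"
  assumes "x \<noteq> 0" "DIM('n) = DIM('m::euclidean_space) + 1"
  shows "linear (perp_isometry x :: 'm \<Rightarrow> 'n) \<and> (\<forall>v::'m. norm (perp_isometry x v :: 'n) = norm v)
         \<and> range (perp_isometry x :: 'm \<Rightarrow> 'n) = {v. x \<bullet> v = 0}"
proof -
  have "dim (UNIV :: 'm set) = dim {v. x \<bullet> v = 0}"
    using dim_hyperplane[OF assms(1)] assms(2) by (simp add: dim_UNIV)
  then obtain f :: "'m \<Rightarrow> 'n" where "linear f" "f ` UNIV = {v. x \<bullet> v = 0}" "\<And>v. v \<in> UNIV \<Longrightarrow> norm (f v) = norm v"
    using isometry_subspaces[OF subspace_UNIV subspace_hyperplane] by metis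
  then have ex: "\<exists>f::'m\<Rightarrow>'n. linear f \<and> (\<forall>v. norm (f v) = norm v) \<and> range f = {v. x \<bullet> v = 0}" by blast
  show ?thesis unfolding perp_isometry_def using someI_ex[OF ex] by blast
qed

lemma iso_inner:
  assumes "linear f" "\<forall>v. norm (f v) = norm v"
  shows "f a \<bullet> f b = a \<bullet> b"
proof -
  have sq: "\<And>v. f v \<bullet> f v = v \<bullet> v" using assms(2) by (metis power2_norm_eq_inner)
  have "f (a + b) \<bullet> f (a + b) = (a + b) \<bullet> (a + b)" by (rule sq)
  then have "(f a + f b) \<bullet> (f a + f b) = (a + b) \<bullet> (a + b)" using linear_add[OF assms(1)] by simp
  then show ?thesis using sq[of a] sq[of b]
    by (simp add: inner_add_left inner_add_right inner_commute)
qed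


lemma NN_set_borel:
  fixes K :: "'n::euclidean_space set"
  assumes K: "K \<in> sets borel" and g: "continuous_on UNIV g"
  shows "{v. NN K (fst (g v)) (snd (g v))} \<in> sets borel"
  using cont_pre[OF g NN_meas[OF K]] by simp

lemma claim1:
  fixes y :: "'n::euclidean_space" and K :: "'n set"
  assumes K[measurable]: "K \<in> sets borel" and C: "cone K" and y: "y \<noteq> 0"
    and dims: "DIM('n) = DIM('m::euclidean_space) + 1"
  shows "emeasure lborel {z. z \<in> K \<and> NN K y z} = 0"
proof -
  define x where "x = y /\<^sub>R norm y"
  define f where "f = (perp_isometry x :: 'm \<Rightarrow> 'n)"
  have nx: "norm x = 1" using y by (simp add: x_def)
  then have x0: "x \<noteq> 0" by auto
  from perp_iso[OF x0 dims] have lin: "linear f" and iso: "\<And>v. norm (f v) = norm v"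
    and rng: "range f = {v. x \<bullet> v = 0}" unfolding f_def by auto
  have fc: "continuous_on UNIV f" using lin by (simp add: linear_continuous_on linear_conv_bounded_linear)
  define Phi where "Phi = (\<lambda>p::'m\<times>real. f (fst p) + snd p *\<^sub>R x)"
  let ?T = "{p::'m\<times>real. f (fst p) + snd p *\<^sub>R x \<in> K \<and> NN K x (f (fst p))}"
  have T1: "{p::'m\<times>real. f (fst p) + snd p *\<^sub>R x \<in> K} \<in> sets borel"
    by (rule cont_pre[OF _ K]) (intro continuous_intros linear_continuous_on_compose[OF _ lin])
  have T2: "{p::'m\<times>real. NN K (fst (x, f (fst p))) (snd (x, f (fst p)))} \<in> sets borel"
    by (rule NN_set_borel[OF K]) (intro continuous_intros linear_continuous_on_compose[OF _ lin])
  have Tb: "?T \<in> sets borel"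
  proof -
    have "?T = {p::'m\<times>real. f (fst p) + snd p *\<^sub>R x \<in> K} \<inter> {p::'m\<times>real. NN K (fst (x, f (fst p))) (snd (x, f (fst p)))}"
      by auto
    then show ?thesis using T1 T2 by auto
  qed
  have Tl: "?T \<in> sets (lborel \<Otimes>\<^sub>M lborel)" using Tb by (simp only: sets_lborel_lborel)
  have ZZ: "\<And>w. emeasure lborel (Pair w -` ?T) = 0"
  proof -
    fix w :: 'm
    show "emeasure lborel (Pair w -` ?T) = 0"
    proof (cases "NN K x (f w)")
      case True
      have "Pair w -` ?T = {a::real. f w + a *\<^sub>R x \<in> K}" using True by auto
      then show ?thesis using slice_null[OF K C NN_sym[OF K True]] by simp
    next
      case False
      then have "Pair w -` ?T = {}" by auto
      then show ?thesis by (metis emeasure_empty)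
    qed
  qed
  have "emeasure (lborel \<Otimes>\<^sub>M lborel) ?T = (\<integral>\<^sup>+w. emeasure lborel (Pair w -` ?T) \<partial>lborel)"
    by (rule lborel.emeasure_pair_measure_alt[OF Tl])
  also have "\<dots> = 0" by (simp only: ZZ) simp
  finally have "emeasure (lborel \<Otimes>\<^sub>M lborel) ?T = 0" by simp
  then have Tn: "?T \<in> null_sets lborel" using Tb by (simp add: lborel_prod null_sets_def)
  show ?thesis
  proof (rule null_linear_image[OF Tn])
    show "linear Phi" unfolding Phi_def
      by (rule linearI) (auto simp: linear_add[OF lin] linear_scale[OF lin] algebra_simps)
    show "DIM('m \<times> real) \<le> DIM('n)" using dims by simp
    have zb1: "{z. NN K (fst (y, z)) (snd (y, z))} \<in> sets borel"
      by (rule NN_set_borel[OF K]) (intro continuous_intros)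
    have "{z. z \<in> K \<and> NN K y z} = K \<inter> {z. NN K (fst (y, z)) (snd (y, z))}" by auto
    then show "{z. z \<in> K \<and> NN K y z} \<in> sets borel" using zb1 by auto
    show "{z. z \<in> K \<and> NN K y z} \<subseteq> Phi ` ?T"
    proof
      fix z assume z: "z \<in> {z. z \<in> K \<and> NN K y z}"
      define a where "a = x \<bullet> z"
      define v where "v = z - a *\<^sub>R x"
      have "x \<bullet> v = 0" using nx by (simp add: v_def a_def inner_diff_right power2_norm_eq_inner[symmetric])
      then have "v \<in> range f" using rng by auto
      then obtain w where w: "f w = v" by auto
      have r0: "norm y \<noteq> 0" using y by simp
      have "NN K ((1/norm y) *\<^sub>R y + 0 *\<^sub>R z) ((-a/norm y) *\<^sub>R y + 1 *\<^sub>R z)"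
        by (rule NN_lin[OF K]) (use z r0 in auto)
      moreover have "(1/norm y) *\<^sub>R y + 0 *\<^sub>R z = x" by (simp add: x_def divide_inverse)
      moreover have "(-a/norm y) *\<^sub>R y + 1 *\<^sub>R z = f w" by (simp add: w v_def x_def divide_inverse)
      ultimately have "NN K x (f w)" by simp
      moreover have "f w + a *\<^sub>R x = z" by (simp add: w v_def)
      ultimately have "(w, a) \<in> ?T" "Phi (w, a) = z" using z by (auto simp: Phi_def)
      then show "z \<in> Phi ` ?T" by force
    qed
  qed
qed


lemma goodK:
  fixes K :: "'n::euclidean_space set"
  assumes K[measurable]: "K \<in> sets borel" and C: "cone K"
    and dims: "DIM('n) = DIM('m::euclidean_space) + 1"
  shows "AE y in lborel. y \<in> K \<longrightarrow> emeasure lborel {z. NN K y z} = 0"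
proof -
  let ?Z2 = "{p::'n\<times>'n. snd p \<in> K \<and> NN K (fst p) (snd p)}"
  let ?Z1 = "{p::'n\<times>'n. fst p \<in> K \<and> NN K (fst p) (snd p)}"
  have A1: "{p::'n\<times>'n. snd p \<in> K} \<in> sets borel" by (rule cont_pre[OF _ K]) (intro continuous_intros)
  have A2: "{p::'n\<times>'n. fst p \<in> K} \<in> sets borel" by (rule cont_pre[OF _ K]) (intro continuous_intros)
  have A3: "{p::'n\<times>'n. NN K (fst p) (snd p)} \<in> sets borel" by (rule NN_meas[OF K])
  have "?Z2 = {p::'n\<times>'n. snd p \<in> K} \<inter> {p::'n\<times>'n. NN K (fst p) (snd p)}" by auto
  then have Z2b: "?Z2 \<in> sets (lborel \<Otimes>\<^sub>M lborel)" using A1 A3 by (simp only: sets_lborel_lborel) auto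
  have "?Z1 = {p::'n\<times>'n. fst p \<in> K} \<inter> {p::'n\<times>'n. NN K (fst p) (snd p)}" by auto
  then have Z1b: "?Z1 \<in> sets (lborel \<Otimes>\<^sub>M lborel)" using A2 A3 by (simp only: sets_lborel_lborel) auto
  have ZZ: "\<And>y. y \<noteq> 0 \<Longrightarrow> emeasure lborel (Pair y -` ?Z2) = 0"
  proof -
    fix y :: 'n assume y: "y \<noteq> 0"
    have "Pair y -` ?Z2 = {z. z \<in> K \<and> NN K y z}" by auto
    then show "emeasure lborel (Pair y -` ?Z2) = 0" using claim1[OF K C y dims] by (simp only:)
  qed
  have "emeasure (lborel \<Otimes>\<^sub>M lborel) ?Z2 = (\<integral>\<^sup>+y. emeasure lborel (Pair y -` ?Z2) \<partial>lborel)"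
    by (rule lborel.emeasure_pair_measure_alt[OF Z2b])
  also have "\<dots> = (\<integral>\<^sup>+y. 0 \<partial>(lborel::'n measure))"
    by (rule nn_integral_cong_AE) (rule eventually_mono[OF AE_lborel_singleton[of 0]], rule ZZ)
  finally have Z2n: "emeasure (lborel \<Otimes>\<^sub>M lborel) ?Z2 = 0" by simp
  have sw: "(\<lambda>(x, y). (y, x)) -` ?Z1 \<inter> space (lborel \<Otimes>\<^sub>M lborel) = ?Z2"
    using NN_sym[OF K] by (auto simp: space_pair_measure)
  have "emeasure (lborel \<Otimes>\<^sub>M lborel) ?Z1 = emeasure (distr (lborel \<Otimes>\<^sub>M lborel) (lborel \<Otimes>\<^sub>M lborel) (\<lambda>(x, y). (y, x))) ?Z1"
    by (subst lborel_pair.distr_pair_swap) simp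
  also have "\<dots> = emeasure (lborel \<Otimes>\<^sub>M lborel) ?Z2"
    by (subst emeasure_distr[OF measurable_pair_swap' Z1b]) (simp only: sw)
  finally have Z1n: "emeasure (lborel \<Otimes>\<^sub>M lborel) ?Z1 = 0" using Z2n by simp
  have "(\<integral>\<^sup>+y. emeasure lborel (Pair y -` ?Z1) \<partial>lborel) = 0"
    using Z1n lborel.emeasure_pair_measure_alt[OF Z1b] by simp
  moreover have Mz: "(\<lambda>y. emeasure lborel (Pair y -` ?Z1)) \<in> borel_measurable lborel"
    by (rule lborel.measurable_emeasure_Pair[OF Z1b])
  ultimately have "AE y in lborel. emeasure lborel (Pair y -` ?Z1) = 0"
    using nn_integral_0_iff_AE[OF Mz] by simp
  then show ?thesis
  proof (rule eventually_mono)
    fix y :: 'n assume h: "emeasure lborel (Pair y -` ?Z1) = 0"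
    show "y \<in> K \<longrightarrow> emeasure lborel {z. NN K y z} = 0"
    proof
      assume "y \<in> K"
      then have "Pair y -` ?Z1 = {z. NN K y z}" by auto
      then show "emeasure lborel {z. NN K y z} = 0" using h by (simp only:)
    qed
  qed
qed


lemma d1: "fst differentiable (at (z::real\<times>real) within S)"
  by (rule bounded_linear_imp_differentiable[OF bounded_linear_fst])
lemma d2: "(\<lambda>p::real\<times>real. cos (snd p)) differentiable (at z within S)"
proof -
  have "((\<lambda>p::real\<times>real. cos (snd p)) has_derivative (\<lambda>h. - sin (snd z) * snd h)) (at z within S)"
    by (auto intro!: derivative_eq_intros)
  then show ?thesis by (auto simp: differentiable_def)
qed
lemma d3: "(\<lambda>p::real\<times>real. sin (snd p)) differentiable (at z within S)"
proof -
  have "((\<lambda>p::real\<times>real. sin (snd p)) has_derivative (\<lambda>h. cos (snd z) * snd h)) (at z within S)"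
    by (auto intro!: derivative_eq_intros)
  then show ?thesis by (auto simp: differentiable_def)
qed

lemma polar_NN:
  fixes x u :: "'n::euclidean_space"
  assumes K[measurable]: "K \<in> sets borel" and C: "cone K" and K0: "0 \<notin> K"
    and nx: "norm x = 1" and nu: "norm u = 1" and xu: "x \<bullet> u = 0"
    and L: "emeasure lborel {\<theta>. \<theta> \<in> {0..<2*pi} \<and> cos \<theta> *\<^sub>R x + sin \<theta> *\<^sub>R u \<in> K} = 0"
  shows "NN K x u"
proof -
  let ?L = "{\<theta>. \<theta> \<in> {0..<2*pi} \<and> cos \<theta> *\<^sub>R x + sin \<theta> *\<^sub>R u \<in> K}"
  let ?Q = "{ab::real\<times>real. fst ab *\<^sub>R x + snd ab *\<^sub>R u \<in> K}"
  define P where "P = (\<lambda>p::real\<times>real. (fst p * cos (snd p), fst p * sin (snd p)))"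
  have Lb: "?L \<in> sets borel"
  proof -
    have "{\<theta>::real. cos \<theta> *\<^sub>R x + sin \<theta> *\<^sub>R u \<in> K} \<in> sets borel"
      by (rule cont_pre[OF _ K]) (intro continuous_intros)
    moreover have "?L = {0..<2*pi} \<inter> {\<theta>::real. cos \<theta> *\<^sub>R x + sin \<theta> *\<^sub>R u \<in> K}" by auto
    ultimately show ?thesis by auto
  qed
  have "{0::real<..} \<times> ?L \<in> null_sets (lborel \<Otimes>\<^sub>M lborel)"
  proof (intro lborel.times_in_null_sets2)
    show "{0::real<..} \<in> sets lborel" by simp
    show "?L \<in> null_sets lborel" using L Lb by (simp add: null_sets_def)
  qed
  then have "{0::real<..} \<times> ?L \<in> null_sets (lborel :: (real\<times>real) measure)" by (simp only: lborel_prod)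
  then have neg: "negligible ({0::real<..} \<times> ?L)" by (rule nullD)
  have "P differentiable_on ({0::real<..} \<times> ?L)" unfolding P_def differentiable_on_def
    by (auto intro!: derivative_intros d1 d2 d3)
  from negligible_differentiable_image_negligible[OF order_refl neg this]
  have negP: "negligible (P ` ({0::real<..} \<times> ?L))" .
  have sub: "?Q \<subseteq> P ` ({0::real<..} \<times> ?L)"
  proof
    fix ab assume ab: "ab \<in> ?Q"
    obtain a b where abd[simp]: "ab = (a,b)" by (cases ab)
    have inK: "a *\<^sub>R x + b *\<^sub>R u \<in> K" using ab by simp
    then have "a *\<^sub>R x + b *\<^sub>R u \<noteq> 0" using K0 by auto
    then have ab0: "a \<noteq> 0 \<or> b \<noteq> 0" by auto
    define r where "r = sqrt (a\<^sup>2 + b\<^sup>2)"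
    have sq: "a\<^sup>2 + b\<^sup>2 > 0" using ab0 by (auto simp: sum_power2_gt_zero_iff)
    then have r0: "r > 0" by (simp add: r_def)
    have r2: "r\<^sup>2 = a\<^sup>2 + b\<^sup>2" using sq by (simp add: r_def)
    have "(a/r)\<^sup>2 + (b/r)\<^sup>2 = (a\<^sup>2 + b\<^sup>2) / r\<^sup>2" by (simp add: power_divide add_divide_distrib)
    also have "\<dots> = 1" using sq r2 by (metis div_self less_irrefl)
    finally have "(a/r)\<^sup>2 + (b/r)\<^sup>2 = 1" .
    then obtain \<theta> where th: "0 \<le> \<theta>" "\<theta> < 2*pi" "a/r = cos \<theta>" "b/r = sin \<theta>"
      by (rule sincos_total_2pi)
    have ea: "a = r * cos \<theta>" and eb: "b = r * sin \<theta>" using th r0 by (auto simp: field_simps)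
    have "r *\<^sub>R (cos \<theta> *\<^sub>R x + sin \<theta> *\<^sub>R u) \<in> K" using inK by (simp add: ea eb scaleR_add_right)
    then have "cos \<theta> *\<^sub>R x + sin \<theta> *\<^sub>R u \<in> K" using C r0 unfolding cone_def by blast
    then have "(r, \<theta>) \<in> {0<..} \<times> ?L" using th r0 by auto
    moreover have "P (r, \<theta>) = ab" by (simp add: P_def ea eb)
    ultimately show "ab \<in> P ` ({0::real<..} \<times> ?L)" by force
  qed
  show ?thesis unfolding NN_def
    by (rule negligible_sub_null[OF negP sub]) (rule Qset_borel[OF K])
qed


lemma space_sphere_measure: "space (sphere_measure :: 'n::euclidean_space measure) = sphere 0 1"
  by (simp add: sphere_measure_def space_scale_measure space_restrict_space)

lemma sets_sphere_measure: "sets (sphere_measure :: 'n::euclidean_space measure) = sets (restrict_space borel (sphere 0 1))"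
  by (simp add: sphere_measure_def)

lemma g_meas: "(\<lambda>z::'n::euclidean_space. z /\<^sub>R norm z) \<in> borel_measurable borel"
  by measurable

lemma pre_sphere_borel:
  fixes S :: "'n::euclidean_space set"
  assumes S: "S \<in> sets borel"
  shows "{z. z \<in> cball 0 1 - {0} \<and> z /\<^sub>R norm z \<in> S} \<in> sets borel"
proof -
  have "(\<lambda>z::'n. z /\<^sub>R norm z) -` S \<inter> space borel \<in> sets borel"
    by (rule measurable_sets[OF g_meas S])
  then have "(cball 0 1 - {0}) \<inter> ((\<lambda>z::'n. z /\<^sub>R norm z) -` S \<inter> space borel) \<in> sets borel" by auto
  moreover have "(cball 0 1 - {0}) \<inter> ((\<lambda>z::'n. z /\<^sub>R norm z) -` S \<inter> space borel) = {z. z \<in> cball 0 1 - {0} \<and> z /\<^sub>R norm z \<in> S}"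
    by auto
  ultimately show ?thesis by simp
qed

lemma emeasure_sphere:
  fixes S :: "'n::euclidean_space set"
  assumes S: "S \<in> sets borel" "S \<subseteq> sphere 0 1"
  shows "emeasure (sphere_measure :: 'n measure) S = of_nat DIM('n) * emeasure lborel {z. z \<in> cball 0 1 - {0} \<and> z /\<^sub>R norm z \<in> S}"
proof -
  let ?D = "cball (0::'n) 1 - {0}"
  have Db: "?D \<in> sets borel" by auto
  have gm: "(\<lambda>z::'n. z /\<^sub>R norm z) \<in> measurable (restrict_space lborel ?D) (restrict_space borel (sphere 0 1))"
  proof (rule measurable_restrict_space2)
    show "(\<lambda>z::'n. z /\<^sub>R norm z) \<in> space (restrict_space lborel ?D) \<rightarrow> sphere 0 1"
      by (auto simp: space_restrict_space)
    show "(\<lambda>z::'n. z /\<^sub>R norm z) \<in> restrict_space lborel ?D \<rightarrow>\<^sub>M borel"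
      by (rule measurable_restrict_space1) (simp add: g_meas measurable_lborel1)
  qed
  have Ss: "S \<in> sets (restrict_space borel (sphere 0 1))"
    using S by (simp add: sets_restrict_space_iff)
  have "emeasure (sphere_measure :: 'n measure) S = of_nat DIM('n) *
     emeasure (distr (restrict_space lborel ?D) (restrict_space borel (sphere 0 1)) (\<lambda>z::'n. z /\<^sub>R norm z)) S"
    by (simp add: sphere_measure_def)
  also have "emeasure (distr (restrict_space lborel ?D) (restrict_space borel (sphere 0 1)) (\<lambda>z::'n. z /\<^sub>R norm z)) S
     = emeasure (restrict_space lborel ?D) ((\<lambda>z::'n. z /\<^sub>R norm z) -` S \<inter> space (restrict_space lborel ?D))"
    by (rule emeasure_distr[OF gm Ss])
  also have "(\<lambda>z::'n. z /\<^sub>R norm z) -` S \<inter> space (restrict_space lborel ?D) = {z. z \<in> ?D \<and> z /\<^sub>R norm z \<in> S}"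
    by (auto simp: space_restrict_space)
  also have "emeasure (restrict_space lborel ?D) {z. z \<in> ?D \<and> z /\<^sub>R norm z \<in> S} = emeasure lborel {z. z \<in> ?D \<and> z /\<^sub>R norm z \<in> S}"
    by (rule emeasure_restrict_space) auto
  finally show ?thesis .
qed

lemma AE_sphereI:
  fixes P :: "'n::euclidean_space \<Rightarrow> bool"
  assumes B: "{x \<in> sphere 0 1. \<not> P x} \<in> sets borel"
      and ae: "AE y in lborel. y \<in> cball 0 1 - {0} \<longrightarrow> P (y /\<^sub>R norm y)"
  shows "AE x in (sphere_measure :: 'n measure). P x"
proof -
  let ?B = "{x \<in> sphere 0 1. \<not> P x}"
  let ?E = "{z. z \<in> cball 0 1 - {0} \<and> z /\<^sub>R norm z \<in> ?B}"
  from ae obtain N where N: "N \<in> null_sets lborel" "{y \<in> space lborel. \<not> (y \<in> cball 0 1 - {0} \<longrightarrow> P (y /\<^sub>R norm y))} \<subseteq> N"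
    by (force elim!: AE_E simp: null_sets_def)
  have "?E \<subseteq> N" using N(2) by auto
  then have "emeasure lborel ?E \<le> emeasure lborel N"
    using N(1) by (intro emeasure_mono) auto
  then have E0: "emeasure lborel ?E = 0" using N(1) by (simp add: null_sets_def)
  have "?B \<subseteq> sphere 0 1" by auto
  then have "emeasure (sphere_measure :: 'n measure) ?B = of_nat DIM('n) * emeasure lborel ?E"
    by (rule emeasure_sphere[OF B])
  also have "\<dots> = 0" by (simp only: E0) simp
  finally have "emeasure (sphere_measure :: 'n measure) ?B = 0" .
  moreover have "?B \<in> sets (sphere_measure :: 'n measure)"
    using B by (simp add: sets_sphere_measure sets_restrict_space_iff) auto
  ultimately have "?B \<in> null_sets (sphere_measure :: 'n measure)" by (simp add: null_sets_def)
  then show ?thesis by (rule AE_I') (auto simp: space_sphere_measure)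
qed


definition qf :: "('n::euclidean_space \<Rightarrow> real) \<Rightarrow> 'n \<Rightarrow> real" where
  "qf p y = indicator (sphere 0 1) y *\<^sub>R p y"

definition Kt :: "('n::euclidean_space \<Rightarrow> real) \<Rightarrow> real \<Rightarrow> 'n set" where
  "Kt p t = {y. y \<noteq> 0 \<and> t < qf p (y /\<^sub>R norm y)}"

lemma qf_meas:
  fixes p :: "'n::euclidean_space \<Rightarrow> real"
  assumes "p \<in> borel_measurable (restrict_space borel (sphere (0::'n) 1))"
  shows "qf p \<in> borel_measurable borel"
proof -
  have "(\<lambda>y. indicator (sphere (0::'n) 1) y *\<^sub>R p y) \<in> borel_measurable borel"
    using assms by (subst (asm) borel_measurable_restrict_space_iff) auto
  then show ?thesis unfolding qf_def[abs_def] .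
qed

lemma qf_unit: "norm y = 1 \<Longrightarrow> qf p y = p y"
  by (simp add: qf_def)

lemma Kt_borel:
  assumes q[measurable]: "qf p \<in> borel_measurable borel"
  shows "Kt p t \<in> sets borel"
  unfolding Kt_def by measurable

lemma Kt_cone: "cone (Kt p t)"
  unfolding cone_def Kt_def by (auto simp: field_simps)

lemma Kt_0: "0 \<notin> Kt p t"
  unfolding Kt_def by auto

lemma Kt_unit: "norm w = 1 \<Longrightarrow> w \<in> Kt p t \<longleftrightarrow> t < p w"
  unfolding Kt_def by (auto simp: qf_unit)

lemma G_t:
  fixes p :: "'n::euclidean_space \<Rightarrow> real"
  assumes q: "qf p \<in> borel_measurable borel"
    and dims: "DIM('n) = DIM('m::euclidean_space) + 1"
  shows "AE x in (sphere_measure :: 'n measure). t < p x \<longrightarrow> emeasure lborel {z. NN (Kt p t) x z} = 0"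
proof (rule AE_sphereI)
  let ?K = "Kt p t"
  have K: "?K \<in> sets borel" by (rule Kt_borel[OF q])
  have Nl: "{pq::'n\<times>'n. NN ?K (fst pq) (snd pq)} \<in> sets (borel \<Otimes>\<^sub>M lborel)"
    using NN_meas[OF K] by (simp only: sets_borel_lborel)
  have Fm: "(\<lambda>x. emeasure lborel (Pair x -` {pq::'n\<times>'n. NN ?K (fst pq) (snd pq)})) \<in> borel_measurable borel"
    by (rule lborel.measurable_emeasure_Pair[OF Nl])
  have "(\<lambda>x. emeasure lborel (Pair x -` {pq::'n\<times>'n. NN ?K (fst pq) (snd pq)})) -` {0} \<inter> space borel \<in> sets borel"
    by (rule measurable_sets[OF Fm]) simp
  then have F0: "{x::'n. emeasure lborel {z. NN ?K x z} = 0} \<in> sets borel" by (simp add: vimage_def)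
  have Q: "{x::'n. t < qf p x} \<in> sets borel" using q by measurable
  have "{x \<in> sphere 0 1. \<not> (t < p x \<longrightarrow> emeasure lborel {z. NN ?K x z} = 0)}
        = sphere 0 1 \<inter> {x. t < qf p x} \<inter> (- {x::'n. emeasure lborel {z. NN ?K x z} = 0})"
    by (auto simp: qf_unit)
  then show "{x \<in> sphere 0 1. \<not> (t < p x \<longrightarrow> emeasure lborel {z. NN ?K x z} = 0)} \<in> sets borel"
    using F0 Q by auto
  show "AE y in lborel. y \<in> cball 0 1 - {0} \<longrightarrow> (t < p (y /\<^sub>R norm y) \<longrightarrow> emeasure lborel {z. NN ?K (y /\<^sub>R norm y) z} = 0)"
  proof (rule eventually_mono[OF goodK[OF K Kt_cone dims]])
    fix y :: 'n
    assume h: "y \<in> ?K \<longrightarrow> emeasure lborel {z. NN ?K y z} = 0"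
    show "y \<in> cball 0 1 - {0} \<longrightarrow> (t < p (y /\<^sub>R norm y) \<longrightarrow> emeasure lborel {z. NN ?K (y /\<^sub>R norm y) z} = 0)"
    proof (intro impI)
      assume y: "y \<in> cball 0 1 - {0}" and tp: "t < p (y /\<^sub>R norm y)"
      have "y \<in> ?K" using y tp by (auto simp: Kt_def qf_unit)
      with h have "emeasure lborel {z. NN ?K y z} = 0" by simp
      moreover have "{z. NN ?K (y /\<^sub>R norm y) z} = {z. NN ?K y z}"
        using NN_scale1_iff[OF K, of "inverse (norm y)" y] y by auto
      ultimately show "emeasure lborel {z. NN ?K (y /\<^sub>R norm y) z} = 0" by simp
    qed
  qed
qed



lemma gc_norm:
  fixes x v :: "'n::euclidean_space"
  assumes "norm x = 1" "norm v = 1" "x \<bullet> v = 0"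
  shows "norm (great_circle x v \<theta>) = 1"
proof -
  have xx: "x \<bullet> x = 1" and vv: "v \<bullet> v = 1" using assms by (simp_all add: power2_norm_eq_inner[symmetric])
  have "(great_circle x v \<theta>) \<bullet> (great_circle x v \<theta>) = (cos \<theta>)\<^sup>2 + (sin \<theta>)\<^sup>2"
    using xx vv assms(3) by (simp add: great_circle_def inner_add_left inner_add_right inner_commute power2_eq_square)
  then have "(norm (great_circle x v \<theta>))\<^sup>2 = 1" by (simp add: power2_norm_eq_inner)
  then show ?thesis using norm_ge_zero[of "great_circle x v \<theta>"] by (simp add: power2_eq_1_iff)
qed

lemma Vset_borel:
  fixes p :: "'n::euclidean_space \<Rightarrow> real"
  assumes q: "qf p \<in> borel_measurable borel" and nx: "norm x = 1"
  shows "Vset p x t \<in> sets borel"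
proof -
  let ?Q = "{vt::'n\<times>real. snd vt \<in> {0..<2*pi} \<and> t < qf p (cos (snd vt) *\<^sub>R x + sin (snd vt) *\<^sub>R fst vt)}"
  have Q1: "{vt::'n\<times>real. snd vt \<in> {0..<2*pi}} \<in> sets borel"
    by (rule cont_pre[of snd "{0..<2*pi}"]) (simp_all add: continuous_on_snd[OF continuous_on_id])
  have Q0: "{y::'n. t < qf p y} \<in> sets borel" using q by measurable
  have Q2: "{vt::'n\<times>real. cos (snd vt) *\<^sub>R x + sin (snd vt) *\<^sub>R fst vt \<in> {y::'n. t < qf p y}} \<in> sets borel"
    by (rule cont_pre[OF _ Q0]) (intro continuous_intros)
  have "?Q = {vt::'n\<times>real. snd vt \<in> {0..<2*pi}} \<inter> {vt::'n\<times>real. cos (snd vt) *\<^sub>R x + sin (snd vt) *\<^sub>R fst vt \<in> {y::'n. t < qf p y}}"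
    by auto
  then have Qb: "?Q \<in> sets borel" using sets.Int[OF Q1 Q2] by (simp only:)
  then have Ql: "?Q \<in> sets (borel \<Otimes>\<^sub>M lborel)" by (simp only: sets_borel_lborel)
  have Gm: "(\<lambda>v. emeasure lborel (Pair v -` ?Q)) \<in> borel_measurable borel"
    by (rule lborel.measurable_emeasure_Pair[OF Ql])
  have "(\<lambda>v. emeasure lborel (Pair v -` ?Q)) -` {0<..} \<inter> space borel \<in> sets borel"
    by (rule measurable_sets[OF Gm borel_open[OF open_greaterThan]])
  moreover have "(\<lambda>v. emeasure lborel (Pair v -` ?Q)) -` {0<..} \<inter> space borel = {v. 0 < emeasure lborel (Pair v -` ?Q)}"
    by (simp only: vimage_def space_borel Int_UNIV_right greaterThan_iff)
  ultimately have G: "{v. 0 < emeasure lborel (Pair v -` ?Q)} \<in> sets borel" by (simp only:)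
  have H: "{v::'n. x \<bullet> v = 0} \<in> sets borel" by (rule borel_closed[OF closed_hyperplane])
  have "Vset p x t = sphere 0 1 \<inter> {v. x \<bullet> v = 0} \<inter> {v. 0 < emeasure lborel (Pair v -` ?Q)}"
  proof (intro set_eqI iffI)
    fix v assume v: "v \<in> Vset p x t"
    then have "Pair v -` ?Q = Lset p x v t"
      using gc_norm[OF nx] by (auto simp: Vset_def Lset_def qf_unit great_circle_def)
    then show "v \<in> sphere 0 1 \<inter> {v. x \<bullet> v = 0} \<inter> {v. 0 < emeasure lborel (Pair v -` ?Q)}"
      using v by (auto simp: Vset_def)
  next
    fix v assume v: "v \<in> sphere 0 1 \<inter> {v. x \<bullet> v = 0} \<inter> {v. 0 < emeasure lborel (Pair v -` ?Q)}"
    then have "Pair v -` ?Q = Lset p x v t"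
      using gc_norm[OF nx] by (auto simp: Lset_def qf_unit great_circle_def)
    then show "v \<in> Vset p x t" using v by (auto simp: Vset_def)
  qed
  then show ?thesis using sets.Int[OF sets.Int[OF borel_closed[OF closed_sphere] H] G] by (simp only:)
qed

lemma sphere_volume_pos: "sphere_volume TYPE('a::euclidean_space) > 0"
proof -
  let ?D = "cball (0::'a) 1 - {0}"
  have "emeasure (sphere_measure :: 'a measure) (sphere 0 1) = of_nat DIM('a) * emeasure lborel {z. z \<in> ?D \<and> z /\<^sub>R norm z \<in> sphere 0 1}"
    by (rule emeasure_sphere) auto
  also have "{z. z \<in> ?D \<and> z /\<^sub>R norm z \<in> sphere 0 1} = ?D" by auto
  also have "emeasure lborel ?D = emeasure lborel (cball (0::'a) 1)"
    by (rule emeasure_Diff_null_set) auto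
  also have "emeasure lborel (cball (0::'a) 1) = ennreal (measure lborel (cball (0::'a) 1))"
    using emeasure_lborel_cball_finite[of "0::'a" 1] by (simp add: emeasure_eq_ennreal_measure less_top)
  finally have e: "emeasure (sphere_measure :: 'a measure) (sphere 0 1) = ennreal (of_nat DIM('a) * measure lborel (cball (0::'a) 1))"
    by (simp add: ennreal_mult ennreal_of_nat_eq_real_of_nat)
  have "measure lborel (ball (0::'a) 1) > 0" using content_ball_pos[of 1 "0::'a"] by simp
  moreover have "measure lborel (ball (0::'a) 1) \<le> measure lborel (cball (0::'a) 1)"
    by (rule measure_mono_fmeasurable) (use emeasure_lborel_cball_finite[of "0::'a" 1] in \<open>auto simp: ball_subset_cball fmeasurable_def\<close>)
  ultimately have "measure lborel (cball (0::'a) 1) > 0" by simp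
  then have "of_nat DIM('a) * measure lborel (cball (0::'a) 1) > 0" by simp
  then show ?thesis unfolding sphere_volume_def using e by (simp add: measure_def)
qed


lemma key:
  fixes p :: "'n::euclidean_space \<Rightarrow> real" and x :: 'n
  assumes q: "qf p \<in> borel_measurable borel" and dims: "DIM('n) = DIM('m::euclidean_space) + 1"
    and nx: "norm x = 1" and tt: "t \<le> t'"
    and N0: "emeasure lborel {z. NN (Kt p t') x z} = 0"
  shows "measure (perp_sphere_measure TYPE('m) x) (Vset p x t) = sphere_volume TYPE('m)"
proof -
  let ?K = "Kt p t'"
  have K: "?K \<in> sets borel" by (rule Kt_borel[OF q])
  define f where "f = (perp_isometry x :: 'm \<Rightarrow> 'n)"
  have x0: "x \<noteq> 0" using nx by auto
  from perp_iso[OF x0 dims] have lin: "linear f" and iso: "\<And>v. norm (f v) = norm v"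
    and rng: "range f = {v. x \<bullet> v = 0}" unfolding f_def by auto
  have fx0: "\<And>w. x \<bullet> f w = 0" using rng by auto
  have xx: "x \<bullet> x = 1" using nx by (simp add: power2_norm_eq_inner[symmetric])
  have fc: "continuous_on UNIV f" using lin by (simp add: linear_continuous_on linear_conv_bounded_linear)
  have adj1: "\<And>w. adjoint f (f w) = w"
  proof -
    fix w
    have "\<forall>e. e \<bullet> adjoint f (f w) = e \<bullet> w"
      using adjoint_works[OF lin] iso_inner[OF lin] iso by auto
    then show "adjoint f (f w) = w" by (simp add: vector_eq_ldot)
  qed
  have adj2: "adjoint f x = 0"
  proof -
    have "\<forall>e. e \<bullet> adjoint f x = e \<bullet> 0"
      using adjoint_works[OF lin] fx0 by (simp add: inner_commute)
    then show ?thesis by (simp only: vector_eq_ldot)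
  qed
  define Psi where "Psi = (\<lambda>z::'n. (adjoint f z, x \<bullet> z))"
  have linPsi: "linear Psi" unfolding Psi_def
    by (rule linearI) (auto simp: linear_add[OF adjoint_linear[OF lin]] linear_scale[OF adjoint_linear[OF lin]] inner_add_right)
  have PsiPhi: "\<And>w a. Psi (f w + a *\<^sub>R x) = (w, a)"
    by (simp add: Psi_def linear_add[OF adjoint_linear[OF lin]] linear_scale[OF adjoint_linear[OF lin]] adj1 adj2 inner_add_right fx0 xx)
  let ?S = "{w::'m. NN ?K x (f w)}"
  have Sb: "?S \<in> sets borel"
    using NN_set_borel[OF K, of "\<lambda>w. (x, f w)"] by (simp add: continuous_on_Pair continuous_on_const fc)
  have Zn: "{z. NN ?K x z} \<in> null_sets lborel"
  proof -
    have "{z. NN ?K (fst (x, z)) (snd (x, z))} \<in> sets borel"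
      by (rule NN_set_borel[OF K]) (intro continuous_intros)
    then show ?thesis using N0 by (simp add: null_sets_def)
  qed
  have STb: "?S \<times> {0..1::real} \<in> sets borel"
  proof -
    have "?S \<times> {0..1::real} \<in> sets (lborel \<Otimes>\<^sub>M lborel)" using Sb by (intro pair_measureI) auto
    then show ?thesis by (simp only: sets_lborel_lborel)
  qed
  have "emeasure lborel (?S \<times> {0..1::real}) = 0"
  proof (rule null_linear_image[OF Zn linPsi _ STb])
    show "DIM('n) \<le> DIM('m \<times> real)" using dims by simp
    show "?S \<times> {0..1::real} \<subseteq> Psi ` {z. NN ?K x z}"
    proof
      fix wa assume wa: "wa \<in> ?S \<times> {0..1::real}"
      obtain w a where [simp]: "wa = (w, a)" by (cases wa)
      have "NN ?K x (f w)" using wa by simp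
      then have "NN ?K (1 *\<^sub>R x + 0 *\<^sub>R f w) (a *\<^sub>R x + 1 *\<^sub>R f w)"
        by (intro NN_lin[OF K]) auto
      then have "NN ?K x (f w + a *\<^sub>R x)" by (simp add: add.commute)
      then show "wa \<in> Psi ` {z. NN ?K x z}" using PsiPhi[of w a] by force
    qed
  qed
  then have "emeasure (lborel \<Otimes>\<^sub>M lborel) (?S \<times> {0..1::real}) = 0" by (simp only: lborel_prod)
  then have "emeasure lborel ?S * emeasure lborel {0..1::real} = 0"
    using lborel.emeasure_pair_measure_Times[of ?S lborel "{0..1::real}"] Sb by simp
  then have S0: "emeasure lborel ?S = 0" by simp
  let ?BB = "{v::'m. v \<in> sphere 0 1 \<and> NN ?K x (f v)}"
  have BBb: "?BB \<in> sets borel"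
  proof -
    have "?BB = sphere 0 1 \<inter> ?S" by auto
    then show ?thesis using sets.Int[OF borel_closed[OF closed_sphere] Sb] by (simp only:)
  qed
  have "emeasure (sphere_measure :: 'm measure) ?BB = of_nat DIM('m) * emeasure lborel {z. z \<in> cball 0 1 - {0} \<and> z /\<^sub>R norm z \<in> ?BB}"
    by (rule emeasure_sphere[OF BBb]) auto
  also have "emeasure lborel {z. z \<in> cball 0 1 - {0} \<and> z /\<^sub>R norm z \<in> ?BB} = 0"
  proof -
    have "{z. z \<in> cball 0 1 - {0} \<and> z /\<^sub>R norm z \<in> ?BB} \<subseteq> ?S"
    proof
      fix z assume z: "z \<in> {z. z \<in> cball 0 1 - {0} \<and> z /\<^sub>R norm z \<in> ?BB}"
      then have "NN ?K x (f (z /\<^sub>R norm z))" by simp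
      then have "NN ?K x (inverse (norm z) *\<^sub>R f z)" by (simp add: linear_scale[OF lin])
      then show "z \<in> ?S" using NN_scale2_iff[OF K, of "inverse (norm z)" x "f z"] z by auto
    qed
    then have "emeasure lborel {z. z \<in> cball 0 1 - {0} \<and> z /\<^sub>R norm z \<in> ?BB} \<le> emeasure lborel ?S"
      using Sb by (intro emeasure_mono) auto
    then show ?thesis using S0 by simp
  qed
  finally have BB0: "emeasure (sphere_measure :: 'm measure) ?BB = 0" by simp
  have BBn: "?BB \<in> null_sets (sphere_measure :: 'm measure)"
    using BB0 BBb by (auto simp: null_sets_def sets_sphere_measure sets_restrict_space_iff)
  have Vb: "Vset p x t \<in> sets borel" by (rule Vset_borel[OF q nx])
  have fm: "f \<in> measurable (sphere_measure :: 'm measure) borel"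
  proof -
    have "f \<in> measurable (restrict_space borel (sphere (0::'m) 1)) borel"
      by (rule measurable_restrict_space1) (rule borel_measurable_continuous_onI[OF fc])
    then show ?thesis using measurable_cong_sets[OF sets_sphere_measure refl] by blast
  qed
  have "measure (perp_sphere_measure TYPE('m) x) (Vset p x t)
        = measure (sphere_measure :: 'm measure) (f -` Vset p x t \<inter> space sphere_measure)"
    unfolding perp_sphere_measure_def f_def[symmetric] by (rule measure_distr[OF fm Vb])
  also have "space (sphere_measure :: 'm measure) = sphere 0 1" by (rule space_sphere_measure)
  finally have m1: "measure (perp_sphere_measure TYPE('m) x) (Vset p x t)
        = measure (sphere_measure :: 'm measure) (f -` Vset p x t \<inter> sphere 0 1)" .
  have Ab: "f -` Vset p x t \<inter> sphere 0 1 \<in> sets (sphere_measure :: 'm measure)"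
    using measurable_sets[OF fm Vb] by (simp add: space_sphere_measure)
  have sub: "sphere 0 1 - ?BB \<subseteq> f -` Vset p x t \<inter> sphere 0 1"
  proof
    fix v :: 'm assume v: "v \<in> sphere 0 1 - ?BB"
    then have nv: "norm v = 1" and nN: "\<not> NN ?K x (f v)" by auto
    have nfv: "norm (f v) = 1" using iso nv by simp
    have Lb: "Lset p x (f v) t \<in> sets borel"
    proof -
      have Q0: "{y::'n. t < qf p y} \<in> sets borel" using q by measurable
      have "{\<theta>::real. great_circle x (f v) \<theta> \<in> {y::'n. t < qf p y}} \<in> sets borel"
        by (rule cont_pre[OF _ Q0]) (simp add: great_circle_def; intro continuous_intros)
      moreover have "Lset p x (f v) t = {0..<2*pi} \<inter> {\<theta>::real. great_circle x (f v) \<theta> \<in> {y::'n. t < qf p y}}"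
        using gc_norm[OF nx nfv fx0] by (auto simp: Lset_def qf_unit)
      ultimately show ?thesis using sets.Int[of "{0..<2*pi}" borel] by (simp only:) simp
    qed
    have "0 < emeasure lborel (Lset p x (f v) t)"
    proof (rule ccontr)
      assume "\<not> 0 < emeasure lborel (Lset p x (f v) t)"
      then have L0: "emeasure lborel (Lset p x (f v) t) = 0" by (simp add: zero_less_iff_neq_zero)
      have "{\<theta>. \<theta> \<in> {0..<2*pi} \<and> cos \<theta> *\<^sub>R x + sin \<theta> *\<^sub>R f v \<in> ?K} \<subseteq> Lset p x (f v) t"
      proof
        fix \<theta> assume th: "\<theta> \<in> {\<theta>. \<theta> \<in> {0..<2*pi} \<and> cos \<theta> *\<^sub>R x + sin \<theta> *\<^sub>R f v \<in> ?K}"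
        have "norm (great_circle x (f v) \<theta>) = 1" by (rule gc_norm[OF nx nfv fx0])
        then have "t' < p (great_circle x (f v) \<theta>)" using th Kt_unit[of "great_circle x (f v) \<theta>" p t']
          by (simp add: great_circle_def)
        then show "\<theta> \<in> Lset p x (f v) t" using th tt by (simp add: Lset_def)
      qed
      then have "emeasure lborel {\<theta>. \<theta> \<in> {0..<2*pi} \<and> cos \<theta> *\<^sub>R x + sin \<theta> *\<^sub>R f v \<in> ?K} = 0"
        using emeasure_mono[of _ "Lset p x (f v) t" lborel] Lb L0 by (metis le_zero_eq sets_lborel)
      then have "NN ?K x (f v)"
        by (rule polar_NN[OF K Kt_cone Kt_0 nx nfv fx0])
      with nN show False by simp
    qed
    then have "f v \<in> Vset p x t" using nfv fx0 by (simp add: Vset_def)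
    then show "v \<in> f -` Vset p x t \<inter> sphere 0 1" using v by auto
  qed
  have sph: "sphere (0::'m) 1 \<in> sets (sphere_measure :: 'm measure)"
    by (simp add: sets_sphere_measure sets_restrict_space_iff)
  have "emeasure (sphere_measure :: 'm measure) (sphere 0 1) = emeasure (sphere_measure :: 'm measure) (sphere 0 1 - ?BB)"
    by (rule emeasure_Diff_null_set[OF BBn sph, symmetric])
  also have "\<dots> \<le> emeasure (sphere_measure :: 'm measure) (f -` Vset p x t \<inter> sphere 0 1)"
    by (rule emeasure_mono[OF sub Ab])
  finally have ge: "emeasure (sphere_measure :: 'm measure) (sphere 0 1) \<le> emeasure (sphere_measure :: 'm measure) (f -` Vset p x t \<inter> sphere 0 1)" .
  have le: "emeasure (sphere_measure :: 'm measure) (f -` Vset p x t \<inter> sphere 0 1) \<le> emeasure (sphere_measure :: 'm measure) (sphere 0 1)"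
    by (rule emeasure_mono) (auto simp: sph)
  have "emeasure (sphere_measure :: 'm measure) (f -` Vset p x t \<inter> sphere 0 1) = emeasure (sphere_measure :: 'm measure) (sphere 0 1)"
    by (rule antisym[OF le ge])
  then show ?thesis using m1 by (simp add: sphere_volume_def measure_def)
qed

theorem mainTheorem6:
  fixes p :: "'n::euclidean_space \<Rightarrow> real"
    and dummy :: "'m::euclidean_space itself"
  assumes dim3: "DIM('n) \<ge> 3"
    and dimm: "DIM('n) = DIM('m) + 1"
    and meas: "p \<in> borel_measurable (restrict_space borel (sphere (0::'n) 1))"
    and pos: "\<And>y. y \<in> sphere 0 1 \<Longrightarrow> p y > 0"
    and int_pos: "(\<integral>\<^sup>+ y. ennreal (p y) \<partial>(sphere_measure :: 'n measure)) > 0"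
    and int_fin: "(\<integral>\<^sup>+ y. ennreal (p y) \<partial>(sphere_measure :: 'n measure)) < \<infinity>"
  shows "AE x in (sphere_measure :: 'n measure).
           (1 / p x) * measure lborel
              {t. 0 < t \<and> t < p x
                  \<and> ereal t < esssup (sphere_measure :: 'n measure) (\<lambda>y. ereal (p y))
                  \<and> measure (perp_sphere_measure TYPE('m) x) (Vset p x t)
                      / sphere_volume TYPE('m) = 1} = 1"
proof -
  have q: "qf p \<in> borel_measurable borel" by (rule qf_meas[OF meas])
  have ae1: "AE x in (sphere_measure :: 'n measure). \<forall>r::rat. real_of_rat r < p x \<longrightarrow> emeasure lborel {z. NN (Kt p (real_of_rat r)) x z} = 0"
    unfolding AE_all_countable using G_t[OF q dimm] by blast
  have ae2: "AE x in (sphere_measure :: 'n measure). ereal (p x) \<le> esssup (sphere_measure :: 'n measure) (\<lambda>y. ereal (p y))"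
    by (rule esssup_AE)
  have ae3: "AE x in (sphere_measure :: 'n measure). x \<in> sphere 0 1"
    using AE_space[of "sphere_measure :: 'n measure"] by (simp add: space_sphere_measure)
  from ae1 ae2 ae3 show ?thesis
  proof eventually_elim
    case (elim x)
    have nx: "norm x = 1" using elim(3) by simp
    have px: "p x > 0" using pos elim(3) by simp
    have svp: "sphere_volume TYPE('m) > 0" by (rule sphere_volume_pos)
    have one: "measure (perp_sphere_measure TYPE('m) x) (Vset p x t) / sphere_volume TYPE('m) = 1"
      if t: "t < p x" for t
    proof -
      obtain r :: rat where r: "t < real_of_rat r" "real_of_rat r < p x" using of_rat_dense[OF t] by blast
      have N0: "emeasure lborel {z. NN (Kt p (real_of_rat r)) x z} = 0" using elim(1) r(2) by blast
      have "measure (perp_sphere_measure TYPE('m) x) (Vset p x t) = sphere_volume TYPE('m)"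
        by (rule key[OF q dimm nx _ N0]) (use r in simp)
      then show ?thesis using svp by simp
    qed
    have "{t. 0 < t \<and> t < p x \<and> ereal t < esssup (sphere_measure :: 'n measure) (\<lambda>y. ereal (p y))
              \<and> measure (perp_sphere_measure TYPE('m) x) (Vset p x t) / sphere_volume TYPE('m) = 1} = {0<..<p x}"
    proof (intro set_eqI iffI)
      fix t assume "t \<in> {0<..<p x}"
      then have t: "0 < t" "t < p x" by auto
      have "ereal t < ereal (p x)" using t by simp
      then have "ereal t < esssup (sphere_measure :: 'n measure) (\<lambda>y. ereal (p y))" using elim(2) by (rule less_le_trans)
      then show "t \<in> {t. 0 < t \<and> t < p x \<and> ereal t < esssup (sphere_measure :: 'n measure) (\<lambda>y. ereal (p y))
              \<and> measure (perp_sphere_measure TYPE('m) x) (Vset p x t) / sphere_volume TYPE('m) = 1}"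
        using t one[OF t(2)] by simp
    qed auto
    then show ?case using px by simp
  qed
qed

end
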